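(* Let $A=KQ/I$ be a finite-dimensional gentle algebra over the field $K$, let $B$ be a band for $A$ and let $q\ge 1$ be an integer. Put $\mathbf{d}=q\cdot\mathbf{dim}\,M(B,\lambda,1)$ (independent of $\lambda$). Then, in the Zariski topology of the module variety $\mathrm{mod}(A,\mathbf{d})$, $$\overline{\mathcal{O}_{B^{\times q}}}=\overline{\bigcup_{\lambda_1,\dots,\lambda_q\in K^*}\mathcal{O}_{M(B,\lambda_1,1)\oplus\cdots\oplus M(B,\lambda_q,1)}},$$ where $\mathcal{O}_M$ denotes the $\mathrm{GL}_{\mathbf{d}}$-orbit of (the points isomorphic to) a module $M$.
   Context: Letters are arrows $\alpha\in Q_1$ (direct letters, traversed from $s(\alpha)$ to $t(\alpha)$) and formal inverses $\alpha^{-1}$ (inverse letters, traversed from $t(\alpha)$ to $s(\alpha)$). A string is a walk $c_1\cdots c_m$ in $Q$ which is reduced (no letter followed by its own inverse) and avoids the relations of $I$ (and their inverses); there are trivial strings $e_v$ of length $0$; a string is identified with its inverse walk. A band is a closed walk $b_1\cdots b_m$ ($m\ge1$) all of whose powers are strings, considered up to cyclic rotation and inversion; it is minimal if it is not of the form $(B')^r$ with $r\ge 2$. For a band $B=b_1\cdots b_m$ with vertex positions $v_1,\dots,v_m$ ($b_t$ goes from $v_t$ to $v_{t+1}$, $v_{m+1}=v_1$), $\lambda\in K^*$ and $q\ge 1$, the band module $M(B,\lambda,q)$ places a copy of $K^q$ at each position $t$ (the space at a vertex $x$ of $Q$ is the direct sum of the copies at positions $t$ with $v_t=x$); each letter $b_t$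 gives the arrow it involves acting between the copies at positions $t$ and $t+1$ by the identity, except for one fixed letter, where it acts by the Jordan block $J(\lambda,q)$. $\mathrm{mod}(A,\mathbf{d})$ is the affine variety of representations of $(Q,I)$ with dimension vector $\mathbf{d}$, with $\mathrm{GL}_{\mathbf{d}}$ acting by base change. For a finite multi-set $\mathcal{D}$ consisting of strings $C_1,\dots,C_s$ and pairwise distinct bands $B_1,\dots,B_t$ with multiplicities $q_1,\dots,q_t$ (written $B_j^{\times q_j}$), its family $\mathcal{O}_{\mathcal{D}}\subseteq\mathrm{mod}(A,\mathbf{d})$ ($\mathbf{d}$ the total dimension vector) is the union of the orbits of all modules $\bigoplus_i M(C_i)\oplus\bigoplus_j\bigoplus_k M(B_j,\lambda_{jk},q_{jk})$ where $(q_{jk})_k$ is a partition of $q_j$ and $\lambda_{jk}\in K^*$; here $M(C)$ is the string module (a copy of $K$ at each vertex position of $C$, arrows acting by identities along the letters of $C$). Standing assumption: $K$ is an algebraically closed field. *)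

theory Defs
  imports "HOL-Computational_Algebra.Polynomial"
begin

text \<open>A bound quiver (Q,I) is given by a vertex set Q0 (verts), an arrow set Q1 (arrows),
source and target maps s, t, and a set R of paths of length two generating I.
A pair (a,b) in R stands for the path "first a, then b" (so t a = s b).\<close>

definition quiver :: "'v set \<Rightarrow> 'a set \<Rightarrow> ('a \<Rightarrow> 'v) \<Rightarrow> ('a \<Rightarrow> 'v) \<Rightarrow> bool" where
  "quiver Q0 Q1 s t \<longleftrightarrow> finite Q0 \<and> finite Q1 \<and> s ` Q1 \<subseteq> Q0 \<and> t ` Q1 \<subseteq> Q0"

definition nonzero_path :: "'a set \<Rightarrow> ('a \<Rightarrow> 'v) \<Rightarrow> ('a \<Rightarrow> 'v) \<Rightarrow> ('a \<times> 'a) set \<Rightarrow> 'a list \<Rightarrow> bool" where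
  "nonzero_path Q1 s t R p \<longleftrightarrow> set p \<subseteq> Q1 \<and>
     (\<forall>i. Suc i < length p \<longrightarrow> t (p ! i) = s (p ! Suc i) \<and> (p ! i, p ! Suc i) \<notin> R)"

definition gentle :: "'v set \<Rightarrow> 'a set \<Rightarrow> ('a \<Rightarrow> 'v) \<Rightarrow> ('a \<Rightarrow> 'v) \<Rightarrow> ('a \<times> 'a) set \<Rightarrow> bool" where
  "gentle Q0 Q1 s t R \<longleftrightarrow>
     quiver Q0 Q1 s t \<and>
     R \<subseteq> {(a, b). a \<in> Q1 \<and> b \<in> Q1 \<and> t a = s b} \<and>
     (\<forall>x\<in>Q0. card {a\<in>Q1. s a = x} \<le> 2 \<and> card {a\<in>Q1. t a = x} \<le> 2) \<and>
     (\<forall>b\<in>Q1.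
        card {a\<in>Q1. t a = s b \<and> (a, b) \<in> R} \<le> 1 \<and>
        card {a\<in>Q1. t a = s b \<and> (a, b) \<notin> R} \<le> 1 \<and>
        card {c\<in>Q1. t b = s c \<and> (b, c) \<in> R} \<le> 1 \<and>
        card {c\<in>Q1. t b = s c \<and> (b, c) \<notin> R} \<le> 1)"

text \<open>Finite-dimensionality of A = KQ/I: the paths avoiding R have bounded length
(equivalently, I is admissible / there are only finitely many nonzero paths).\<close>
definition fin_dim :: "'a set \<Rightarrow> ('a \<Rightarrow> 'v) \<Rightarrow> ('a \<Rightarrow> 'v) \<Rightarrow> ('a \<times> 'a) set \<Rightarrow> bool" where
  "fin_dim Q1 s t R \<longleftrightarrow> (\<exists>N. \<forall>p. nonzero_path Q1 s t R p \<longrightarrow> length p < N)"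

text \<open>A letter is (a, True) for the direct letter a, (a, False) for the inverse letter a^-1.\<close>

fun lsrc :: "('a \<Rightarrow> 'v) \<Rightarrow> ('a \<Rightarrow> 'v) \<Rightarrow> 'a \<times> bool \<Rightarrow> 'v" where
  "lsrc s t (a, d) = (if d then s a else t a)"

fun ltgt :: "('a \<Rightarrow> 'v) \<Rightarrow> ('a \<Rightarrow> 'v) \<Rightarrow> 'a \<times> bool \<Rightarrow> 'v" where
  "ltgt s t (a, d) = (if d then t a else s a)"

fun linv :: "'a \<times> bool \<Rightarrow> 'a \<times> bool" where
  "linv (a, d) = (a, \<not> d)"

fun lrel :: "('a \<times> 'a) set \<Rightarrow> 'a \<times> bool \<Rightarrow> 'a \<times> bool \<Rightarrow> bool" where
  "lrel R (a, d) (b, e) =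
     ((d \<and> e \<and> (a, b) \<in> R) \<or> (\<not> d \<and> \<not> e \<and> (b, a) \<in> R))"

definition is_string_word ::
  "'a set \<Rightarrow> ('a \<Rightarrow> 'v) \<Rightarrow> ('a \<Rightarrow> 'v) \<Rightarrow> ('a \<times> 'a) set \<Rightarrow> ('a \<times> bool) list \<Rightarrow> bool" where
  "is_string_word Q1 s t R w \<longleftrightarrow> fst ` set w \<subseteq> Q1 \<and>
     (\<forall>i. Suc i < length w \<longrightarrow>
        ltgt s t (w ! i) = lsrc s t (w ! Suc i) \<and>
        w ! Suc i \<noteq> linv (w ! i) \<and>
        \<not> lrel R (w ! i) (w ! Suc i))"

definition is_band ::
  "'a set \<Rightarrow> ('a \<Rightarrow> 'v) \<Rightarrow> ('a \<Rightarrow> 'v) \<Rightarrow> ('a \<times> 'a) set \<Rightarrow> ('a \<times> bool) list \<Rightarrow> bool" where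
  "is_band Q1 s t R B \<longleftrightarrow> B \<noteq> [] \<and> ltgt s t (last B) = lsrc s t (hd B) \<and>
     (\<forall>n\<ge>1. is_string_word Q1 s t R (concat (replicate n B)))"

text \<open>A based representation: for each vertex x a finite index set V x (a basis of the
space at x) and for each arrow a a matrix M a with rows indexed by V (t a) and columns by
V (s a).\<close>

definition rep_iso ::
  "'v set \<Rightarrow> 'a set \<Rightarrow> ('a \<Rightarrow> 'v) \<Rightarrow> ('a \<Rightarrow> 'v) \<Rightarrow>
   ('v \<Rightarrow> 'i set) \<Rightarrow> ('a \<Rightarrow> 'i \<Rightarrow> 'i \<Rightarrow> 'k::field) \<Rightarrow>
   ('v \<Rightarrow> 'j set) \<Rightarrow> ('a \<Rightarrow> 'j \<Rightarrow> 'j \<Rightarrow> 'k) \<Rightarrow> bool" where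
  "rep_iso Q0 Q1 s t V M V' M' \<longleftrightarrow>
    (\<exists>(f :: 'v \<Rightarrow> 'j \<Rightarrow> 'i \<Rightarrow> 'k) (g :: 'v \<Rightarrow> 'i \<Rightarrow> 'j \<Rightarrow> 'k).
       (\<forall>x\<in>Q0. (\<forall>r\<in>V x. \<forall>c\<in>V x. (\<Sum>k\<in>V' x. g x r k * f x k c) = (if r = c then 1 else 0)) \<and>
                (\<forall>r\<in>V' x. \<forall>c\<in>V' x. (\<Sum>k\<in>V x. f x r k * g x k c) = (if r = c then 1 else 0))) \<and>
       (\<forall>a\<in>Q1. \<forall>r\<in>V' (t a). \<forall>c\<in>V (s a).
          (\<Sum>k\<in>V' (s a). M' a r k * f (s a) k c) = (\<Sum>k\<in>V (t a). f (t a) r k * M a k c)))"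

text \<open>Points of mod(A,d): families of matrices X a of size d(t a) x d(s a) (entries outside
this range and for non-arrows are 0), satisfying the relations: X b * X a = 0 for (a,b) in R.\<close>
definition modvar ::
  "'a set \<Rightarrow> ('a \<Rightarrow> 'v) \<Rightarrow> ('a \<Rightarrow> 'v) \<Rightarrow> ('a \<times> 'a) set \<Rightarrow> ('v \<Rightarrow> nat) \<Rightarrow>
   ('a \<Rightarrow> nat \<Rightarrow> nat \<Rightarrow> 'k::field) set" where
  "modvar Q1 s t R d = {X.
     (\<forall>a j i. (a \<notin> Q1 \<or> d (t a) \<le> j \<or> d (s a) \<le> i) \<longrightarrow> X a j i = 0) \<and>
     (\<forall>(a, b)\<in>R. \<forall>r < d (t b). \<forall>c < d (s a). (\<Sum>k < d (t a). X b r k * X a k c) = 0)}"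

inductive_set zpoly :: "(('a \<Rightarrow> nat \<Rightarrow> nat \<Rightarrow> 'k::field) \<Rightarrow> 'k) set" where
  zconst: "(\<lambda>X. c) \<in> zpoly"
| zcoord: "(\<lambda>X. X a j i) \<in> zpoly"
| zadd: "f \<in> zpoly \<Longrightarrow> g \<in> zpoly \<Longrightarrow> (\<lambda>X. f X + g X) \<in> zpoly"
| zmult: "f \<in> zpoly \<Longrightarrow> g \<in> zpoly \<Longrightarrow> (\<lambda>X. f X * g X) \<in> zpoly"

definition zclosure ::
  "('a \<Rightarrow> nat \<Rightarrow> nat \<Rightarrow> 'k::field) set \<Rightarrow> ('a \<Rightarrow> nat \<Rightarrow> nat \<Rightarrow> 'k) set \<Rightarrow> ('a \<Rightarrow> nat \<Rightarrow> nat \<Rightarrow> 'k) set" where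
  "zclosure Y S = {x\<in>Y. \<forall>f\<in>zpoly. (\<forall>y\<in>S. f y = 0) \<longrightarrow> f x = 0}"

definition orbit ::
  "'v set \<Rightarrow> 'a set \<Rightarrow> ('a \<Rightarrow> 'v) \<Rightarrow> ('a \<Rightarrow> 'v) \<Rightarrow> ('a \<times> 'a) set \<Rightarrow> ('v \<Rightarrow> nat) \<Rightarrow>
   ('v \<Rightarrow> 'i set) \<Rightarrow> ('a \<Rightarrow> 'i \<Rightarrow> 'i \<Rightarrow> 'k::field) \<Rightarrow> ('a \<Rightarrow> nat \<Rightarrow> nat \<Rightarrow> 'k) set" where
  "orbit Q0 Q1 s t R d V M = {X \<in> modvar Q1 s t R d. rep_iso Q0 Q1 s t (\<lambda>x. {..<d x}) X V M}"

definition jordan :: "'k::field \<Rightarrow> nat \<Rightarrow> nat \<Rightarrow> 'k" where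
  "jordan lam r c = (if r = c then lam else if c = Suc r then 1 else 0)"

text \<open>M(B,lambda,q): basis vectors (p,k), p a position of B (vertex v_p = source of b_p),
k < q.  The letter at position 0 is the fixed letter acting by J(lambda,q).\<close>
definition bandV :: "('a \<Rightarrow> 'v) \<Rightarrow> ('a \<Rightarrow> 'v) \<Rightarrow> ('a \<times> bool) list \<Rightarrow> nat \<Rightarrow> 'v \<Rightarrow> (nat \<times> nat) set" where
  "bandV s t B q x = {(p, k). p < length B \<and> lsrc s t (B ! p) = x \<and> k < q}"

definition bandM :: "('a \<times> bool) list \<Rightarrow> 'k::field \<Rightarrow> 'a \<Rightarrow> nat \<times> nat \<Rightarrow> nat \<times> nat \<Rightarrow> 'k" where
  "bandM B lam a rk cl = (case rk of (r, k') \<Rightarrow> case cl of (c, k) \<Rightarrow>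
     (\<Sum>p < length B.
        let e = (if p = 0 then jordan lam k' k else (if k' = k then 1 else 0)) in
        (if B ! p = (a, True) \<and> c = p \<and> r = Suc p mod length B then e else 0) +
        (if B ! p = (a, False) \<and> c = Suc p mod length B \<and> r = p then e else 0)))"

definition bsumV :: "('a \<Rightarrow> 'v) \<Rightarrow> ('a \<Rightarrow> 'v) \<Rightarrow> ('a \<times> bool) list \<Rightarrow> nat list \<Rightarrow> 'v \<Rightarrow> (nat \<times> nat \<times> nat) set" where
  "bsumV s t B qs x = {(j, b). j < length qs \<and> b \<in> bandV s t B (qs ! j) x}"

definition bsumM :: "('a \<times> bool) list \<Rightarrow> 'k::field list \<Rightarrow> 'a \<Rightarrow> nat \<times> nat \<times> nat \<Rightarrow> nat \<times> nat \<times> nat \<Rightarrow> 'k" where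
  "bsumM B ls a rb cb = (case rb of (j', b') \<Rightarrow> case cb of (j, b) \<Rightarrow>
     (if j' = j then bandM B (ls ! j) a b' b else 0))"

definition band_dim :: "('a \<Rightarrow> 'v) \<Rightarrow> ('a \<Rightarrow> 'v) \<Rightarrow> ('a \<times> bool) list \<Rightarrow> 'v \<Rightarrow> nat" where
  "band_dim s t B x = card {p. p < length B \<and> lsrc s t (B ! p) = x}"

text \<open>The family O_{B^{x q}}: union of the orbits of all
M(B,lambda_1,q_1) + ... + M(B,lambda_r,q_r) with (q_j) a partition of q, lambda_j nonzero.\<close>
definition band_family ::
  "'v set \<Rightarrow> 'a set \<Rightarrow> ('a \<Rightarrow> 'v) \<Rightarrow> ('a \<Rightarrow> 'v) \<Rightarrow> ('a \<times> 'a) set \<Rightarrow> ('a \<times> bool) list \<Rightarrow> nat \<Rightarrow>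
   ('a \<Rightarrow> nat \<Rightarrow> nat \<Rightarrow> 'k::field) set" where
  "band_family Q0 Q1 s t R B q =
     (\<Union>{orbit Q0 Q1 s t R (\<lambda>x. q * band_dim s t B x) (bsumV s t B qs) (bsumM B ls) |
          qs ls. (\<forall>j\<in>set qs. j \<ge> 1) \<and> sum_list qs = q \<and> length ls = length qs \<and> (0::'k) \<notin> set ls})"

end

theory Submission
  imports Defs
begin



lemma alg_closed_infinite: "infinite (UNIV :: 'k::alg_closed_field set)"
proof
  assume fin: "finite (UNIV :: 'k set)"
  define p :: "'k poly" where "p = (\<Prod>a\<in>UNIV. [:-a, 1:])"
  have dp: "degree p = card (UNIV :: 'k set)"
    unfolding p_def by (subst degree_prod_eq_sum_degree) auto
  have "card (UNIV :: 'k set) > 0" using fin by (simp add: finite_UNIV_card_ge_0)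
  hence "degree (p + 1) > 0" using dp by (subst degree_add_eq_left) auto
  then obtain x where "poly (p + 1) x = 0" using alg_closed_imp_poly_has_root by blast
  moreover have "poly p x = 0" unfolding p_def poly_prod
    using fin by (simp add: prod_zero_iff)
  ultimately show False by simp
qed

lemma zclosure_mono: "S \<subseteq> T \<Longrightarrow> zclosure Y S \<subseteq> zclosure Y T"
  unfolding zclosure_def by blast

lemma zclosure_sub: "S \<subseteq> zclosure Y T \<Longrightarrow> zclosure Y S \<subseteq> zclosure Y T"
  unfolding zclosure_def by blast

definition mm :: "'j set \<Rightarrow> ('i \<Rightarrow> 'j \<Rightarrow> 'k::field) \<Rightarrow> ('j \<Rightarrow> 'l \<Rightarrow> 'k) \<Rightarrow> 'i \<Rightarrow> 'l \<Rightarrow> 'k" where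
  "mm S A C r c = (\<Sum>k\<in>S. A r k * C k c)"

definition idm :: "'i \<Rightarrow> 'i \<Rightarrow> 'k::field" where "idm r c = (if r = c then 1 else 0)"

lemma mm_assoc: "mm T (mm S A C) D = mm S A (mm T C D)"
  unfolding mm_def
  by (intro ext) (simp add: sum_distrib_left sum_distrib_right mult.assoc sum.swap[of _ T])

lemma mm_cong: "(\<And>k. k \<in> S \<Longrightarrow> A r k = A' r k) \<Longrightarrow> (\<And>k. k \<in> S \<Longrightarrow> C k c = C' k c) \<Longrightarrow>
  mm S A C r c = mm S A' C' r c"
  unfolding mm_def by (rule sum.cong) auto

lemma mm_idm_right: "finite S \<Longrightarrow> c \<in> S \<Longrightarrow> mm S A idm r c = A r c"
  unfolding mm_def idm_def by (simp add: if_distrib cong: if_cong)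

lemma mm_idm_left: "finite S \<Longrightarrow> r \<in> S \<Longrightarrow> mm S idm C r c = C r c"
proof -
  assume "finite S" "r \<in> S"
  have "mm S idm C r c = (\<Sum>k\<in>S. if k = r then C k c else 0)"
    unfolding mm_def idm_def by (rule sum.cong) auto
  thus ?thesis using \<open>finite S\<close> \<open>r \<in> S\<close> by simp
qed

lemma rep_iso_mm: "rep_iso Q0 Q1 s t V M V' M' \<longleftrightarrow>
    (\<exists>f g. (\<forall>x\<in>Q0. (\<forall>r\<in>V x. \<forall>c\<in>V x. mm (V' x) (g x) (f x) r c = idm r c) \<and>
                (\<forall>r\<in>V' x. \<forall>c\<in>V' x. mm (V x) (f x) (g x) r c = idm r c)) \<and>
       (\<forall>a\<in>Q1. \<forall>r\<in>V' (t a). \<forall>c\<in>V (s a).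
          mm (V' (s a)) (M' a) (f (s a)) r c = mm (V (t a)) (f (t a)) (M a) r c))"
  unfolding rep_iso_def mm_def idm_def by simp

lemma rep_iso_trans:
  assumes fin: "\<And>x. finite (V' x)"
    and h1: "rep_iso Q0 Q1 s t V M V' M'" and h2: "rep_iso Q0 Q1 s t V' M' V'' M''"
  shows "rep_iso Q0 Q1 s t V M V'' M''"
proof -
  obtain f1 g1 where i1: "\<forall>x\<in>Q0. (\<forall>r\<in>V x. \<forall>c\<in>V x. mm (V' x) (g1 x) (f1 x) r c = idm r c) \<and>
                (\<forall>r\<in>V' x. \<forall>c\<in>V' x. mm (V x) (f1 x) (g1 x) r c = idm r c)"
    and a1: "\<forall>a\<in>Q1. \<forall>r\<in>V' (t a). \<forall>c\<in>V (s a).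
          mm (V' (s a)) (M' a) (f1 (s a)) r c = mm (V (t a)) (f1 (t a)) (M a) r c"
    using h1 unfolding rep_iso_mm by blast
  obtain f2 g2 where i2: "\<forall>x\<in>Q0. (\<forall>r\<in>V' x. \<forall>c\<in>V' x. mm (V'' x) (g2 x) (f2 x) r c = idm r c) \<and>
                (\<forall>r\<in>V'' x. \<forall>c\<in>V'' x. mm (V' x) (f2 x) (g2 x) r c = idm r c)"
    and a2: "\<forall>a\<in>Q1. \<forall>r\<in>V'' (t a). \<forall>c\<in>V' (s a).
          mm (V'' (s a)) (M'' a) (f2 (s a)) r c = mm (V' (t a)) (f2 (t a)) (M' a) r c"
    using h2 unfolding rep_iso_mm by blast
  define f where "f x = mm (V' x) (f2 x) (f1 x)" for x
  define g where "g x = mm (V' x) (g1 x) (g2 x)" for x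
  show ?thesis unfolding rep_iso_mm
  proof (intro exI[of _ f] exI[of _ g] conjI ballI)
    fix x r c assume x: "x \<in> Q0" and r: "r \<in> V x" and c: "c \<in> V x"
    have "mm (V'' x) (g x) (f x) r c = mm (V' x) (g1 x) (mm (V'' x) (g2 x) (mm (V' x) (f2 x) (f1 x))) r c"
      unfolding f_def g_def mm_assoc ..
    also have "\<dots> = mm (V' x) (g1 x) (mm (V' x) (mm (V'' x) (g2 x) (f2 x)) (f1 x)) r c"
      by (simp add: mm_assoc)
    also have "\<dots> = mm (V' x) (g1 x) (f1 x) r c"
    proof (rule mm_cong)
      fix k assume k: "k \<in> V' x"
      have "mm (V' x) (mm (V'' x) (g2 x) (f2 x)) (f1 x) k c = mm (V' x) idm (f1 x) k c"
        by (rule mm_cong) (use i2 x k in auto)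
      also have "\<dots> = f1 x k c" using fin k by (rule mm_idm_left)
      finally show "mm (V' x) (mm (V'' x) (g2 x) (f2 x)) (f1 x) k c = f1 x k c" .
    qed simp
    also have "\<dots> = idm r c" using i1 x r c by auto
    finally show "mm (V'' x) (g x) (f x) r c = idm r c" .
  next
    fix x r c assume x: "x \<in> Q0" and r: "r \<in> V'' x" and c: "c \<in> V'' x"
    have "mm (V x) (f x) (g x) r c = mm (V' x) (f2 x) (mm (V x) (f1 x) (mm (V' x) (g1 x) (g2 x))) r c"
      unfolding f_def g_def mm_assoc ..
    also have "\<dots> = mm (V' x) (f2 x) (mm (V' x) (mm (V x) (f1 x) (g1 x)) (g2 x)) r c"
      by (simp add: mm_assoc)
    also have "\<dots> = mm (V' x) (f2 x) (g2 x) r c"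
    proof (rule mm_cong)
      fix k assume k: "k \<in> V' x"
      have "mm (V' x) (mm (V x) (f1 x) (g1 x)) (g2 x) k c = mm (V' x) idm (g2 x) k c"
        by (rule mm_cong) (use i1 x k in auto)
      also have "\<dots> = g2 x k c" using fin k by (rule mm_idm_left)
      finally show "mm (V' x) (mm (V x) (f1 x) (g1 x)) (g2 x) k c = g2 x k c" .
    qed simp
    also have "\<dots> = idm r c" using i2 x r c by auto
    finally show "mm (V x) (f x) (g x) r c = idm r c" .
  next
    fix a r c assume a: "a \<in> Q1" and r: "r \<in> V'' (t a)" and c: "c \<in> V (s a)"
    have "mm (V'' (s a)) (M'' a) (f (s a)) r c = mm (V' (s a)) (mm (V'' (s a)) (M'' a) (f2 (s a))) (f1 (s a)) r c"
      unfolding f_def mm_assoc ..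
    also have "\<dots> = mm (V' (s a)) (mm (V' (t a)) (f2 (t a)) (M' a)) (f1 (s a)) r c"
      by (rule mm_cong) (use a2 a r in auto)
    also have "\<dots> = mm (V' (t a)) (f2 (t a)) (mm (V' (s a)) (M' a) (f1 (s a))) r c"
      by (simp add: mm_assoc)
    also have "\<dots> = mm (V' (t a)) (f2 (t a)) (mm (V (t a)) (f1 (t a)) (M a)) r c"
      by (rule mm_cong) (use a1 a c in auto)
    also have "\<dots> = mm (V (t a)) (f (t a)) (M a) r c"
      unfolding f_def mm_assoc ..
    finally show "mm (V'' (s a)) (M'' a) (f (s a)) r c = mm (V (t a)) (f (t a)) (M a) r c" .
  qed
qed

lemma rep_iso_reindex:
  fixes \<phi> :: "'j \<Rightarrow> 'i" and M :: "'a \<Rightarrow> 'i \<Rightarrow> 'i \<Rightarrow> 'k::field" and V :: "'v \<Rightarrow> 'i set"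
  assumes bij: "\<And>x. bij_betw \<phi> (V' x) (V x)" and fin: "\<And>x. finite (V' x)"
    and eq: "\<And>a r c. a \<in> Q1 \<Longrightarrow> r \<in> V' (t a) \<Longrightarrow> c \<in> V' (s a) \<Longrightarrow> M' a r c = M a (\<phi> r) (\<phi> c)"
  shows "rep_iso Q0 Q1 s t V M V' M'"
proof -
  define f :: "'v \<Rightarrow> 'j \<Rightarrow> 'i \<Rightarrow> 'k" where "f x r c = (if \<phi> r = c then 1 else 0)" for x r c
  define g :: "'v \<Rightarrow> 'i \<Rightarrow> 'j \<Rightarrow> 'k" where "g x r c = (if \<phi> c = r then 1 else 0)" for x r c
  have finV: "finite (V x)" for x using bij[of x] fin[of x] bij_betw_finite by blast
  show ?thesis unfolding rep_iso_mm
  proof (intro exI[of _ f] exI[of _ g] conjI ballI)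
    fix x r c assume r: "r \<in> V x" and c: "c \<in> V x"
    obtain k where k: "k \<in> V' x" "\<phi> k = r" using bij[of x] r by (metis bij_betw_imp_surj_on imageE)
    have "mm (V' x) (g x) (f x) r c = (\<Sum>k'\<in>V' x. if k' = k then (if r = c then 1 else 0) else 0)"
      unfolding mm_def f_def g_def
      apply (rule sum.cong, simp)
      using bij[of x] k by (auto simp: bij_betw_def inj_on_def)
    also have "\<dots> = idm r c" using fin[of x] k by (simp add: idm_def)
    finally show "mm (V' x) (g x) (f x) r c = idm r c" .
  next
    fix x r c assume r: "r \<in> V' x" and c: "c \<in> V' x"
    have "mm (V x) (f x) (g x) r c = (\<Sum>k\<in>V x. if k = \<phi> r then (if \<phi> r = \<phi> c then 1 else 0) else 0)"
      unfolding mm_def f_def g_def by (rule sum.cong) auto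
    also have "\<dots> = idm r c" using finV[of x] r c bij[of x]
      by (auto simp: idm_def bij_betw_def inj_on_def)
    finally show "mm (V x) (f x) (g x) r c = idm r c" .
  next
    fix a r c assume a: "a \<in> Q1" and r: "r \<in> V' (t a)" and c: "c \<in> V (s a)"
    obtain k where k: "k \<in> V' (s a)" "\<phi> k = c" using bij[of "s a"] c by (metis bij_betw_imp_surj_on imageE)
    have "mm (V' (s a)) (M' a) (f (s a)) r c = (\<Sum>k'\<in>V' (s a). if k' = k then M' a r k else 0)"
      unfolding mm_def f_def
      apply (rule sum.cong, simp)
      using bij[of "s a"] k by (auto simp: bij_betw_def inj_on_def)
    also have "\<dots> = M' a r k" using fin k by simp
    also have "\<dots> = M a (\<phi> r) c" using eq a r k by auto
    also have "\<dots> = (\<Sum>k\<in>V (t a). if k = \<phi> r then M a k c else 0)"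
      using finV[of "t a"] bij[of "t a"] r by (auto simp: bij_betw_def)
    also have "\<dots> = mm (V (t a)) (f (t a)) (M a) r c"
      unfolding mm_def f_def by (rule sum.cong) auto
    finally show "mm (V' (s a)) (M' a) (f (s a)) r c = mm (V (t a)) (f (t a)) (M a) r c" .
  qed
qed




definition Ps :: "('a \<Rightarrow> 'v) \<Rightarrow> ('a \<Rightarrow> 'v) \<Rightarrow> ('a \<times> bool) list \<Rightarrow> 'v \<Rightarrow> nat set" where
  "Ps s t B x = {p. p < length B \<and> lsrc s t (B ! p) = x}"

definition Vg :: "('a \<Rightarrow> 'v) \<Rightarrow> ('a \<Rightarrow> 'v) \<Rightarrow> ('a \<times> bool) list \<Rightarrow> 'c set \<Rightarrow> 'v \<Rightarrow> (nat \<times> 'c) set" where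
  "Vg s t B I x = Ps s t B x \<times> I"

definition cnd :: "('a \<times> bool) list \<Rightarrow> 'a \<Rightarrow> nat \<Rightarrow> nat \<Rightarrow> nat \<Rightarrow> 'k::field" where
  "cnd B a p r c = (if B ! p = (a, True) \<and> c = p \<and> r = Suc p mod length B then 1 else 0) +
     (if B ! p = (a, False) \<and> c = Suc p mod length B \<and> r = p then 1 else 0)"

definition ee :: "('c \<Rightarrow> 'c \<Rightarrow> 'k::field) \<Rightarrow> nat \<Rightarrow> 'c \<Rightarrow> 'c \<Rightarrow> 'k" where
  "ee A p u' u = (if p = 0 then A u' u else idm u' u)"

definition Mg :: "('a \<times> bool) list \<Rightarrow> ('c \<Rightarrow> 'c \<Rightarrow> 'k::field) \<Rightarrow> 'a \<Rightarrow> nat \<times> 'c \<Rightarrow> nat \<times> 'c \<Rightarrow> 'k" where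
  "Mg B A a rk cl = (\<Sum>p < length B. cnd B a p (fst rk) (fst cl) * ee A p (snd rk) (snd cl))"

lemma finite_Ps: "finite (Ps s t B x)" unfolding Ps_def by simp

lemma finite_Vg: "finite I \<Longrightarrow> finite (Vg s t B I x)" unfolding Vg_def by (simp add: finite_Ps)

lemma cnd_nz: "cnd B a p r c \<noteq> (0::'k::field) \<Longrightarrow>
   (B ! p = (a, True) \<and> c = p \<and> r = Suc p mod length B) \<or> (B ! p = (a, False) \<and> c = Suc p mod length B \<and> r = p)"
  unfolding cnd_def by (auto split: if_splits)

lemma Mg_nz: "Mg B A a (r, u') (c, u) \<noteq> (0::'k::field) \<Longrightarrow> \<exists>p<length B.
   (B ! p = (a, True) \<and> c = p \<and> r = Suc p mod length B) \<or> (B ! p = (a, False) \<and> c = Suc p mod length B \<and> r = p)"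
proof -
  assume "Mg B A a (r, u') (c, u) \<noteq> 0"
  then obtain p where "p < length B" "cnd B a p r c * ee A p u' u \<noteq> (0::'k)"
    unfolding Mg_def by (metis (no_types, lifting) fst_conv lessThan_iff snd_conv sum.neutral)
  thus ?thesis using cnd_nz[of B a p r c] by auto
qed

lemma Suc_mod_less: "p < m \<Longrightarrow> Suc p mod m = (if Suc p = m then 0 else Suc p)"
  by auto

lemma band_consec:
  assumes "is_band Q1 s t R B" "p < length B"
  shows "\<not> lrel R (B ! p) (B ! (Suc p mod length B))"
proof -
  have "is_string_word Q1 s t R (concat (replicate 2 B))" using assms(1) unfolding is_band_def by auto
  hence w: "is_string_word Q1 s t R (B @ B)" by (simp add: numeral_2_eq_2)
  have "Suc p < length (B @ B)" using assms(2) by simp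
  hence "\<not> lrel R ((B @ B) ! p) ((B @ B) ! Suc p)" using w unfolding is_string_word_def by blast
  moreover have "(B @ B) ! p = B ! p" using assms(2) by (simp add: nth_append)
  moreover have "(B @ B) ! Suc p = B ! (Suc p mod length B)"
    using assms(2) by (auto simp: nth_append Suc_mod_less)
  ultimately show ?thesis by simp
qed

lemma Mg_rel:
  assumes band: "is_band Q1 s t R B" and ab: "(a, b) \<in> R"
  shows "Mg B A b k1 k * Mg B A' a k k2 = (0::'k::field)"
proof (rule ccontr)
  assume "Mg B A b k1 k * Mg B A' a k k2 \<noteq> 0"
  hence n1: "Mg B A b (fst k1, snd k1) (fst k, snd k) \<noteq> 0" and n2: "Mg B A' a (fst k, snd k) (fst k2, snd k2) \<noteq> 0"
    by auto
  obtain p' where p': "p' < length B" "(B ! p' = (b, True) \<and> fst k = p' \<and> fst k1 = Suc p' mod length B) \<or> (B ! p' = (b, False) \<and> fst k = Suc p' mod length B \<and> fst k1 = p')"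
    using Mg_nz[OF n1] by blast
  obtain p where p: "p < length B" "(B ! p = (a, True) \<and> fst k2 = p \<and> fst k = Suc p mod length B) \<or> (B ! p = (a, False) \<and> fst k2 = Suc p mod length B \<and> fst k = p)"
    using Mg_nz[OF n2] by blast
  have c1: "\<not> lrel R (B ! p) (B ! (Suc p mod length B))" by (rule band_consec[OF band p(1)])
  have c2: "\<not> lrel R (B ! p') (B ! (Suc p' mod length B))" by (rule band_consec[OF band p'(1)])
  have inj: "Suc p mod length B = Suc p' mod length B \<Longrightarrow> p = p'"
    using p(1) p'(1) by (auto simp: Suc_mod_less split: if_splits)
  from p p' show False
  proof (elim disjE conjE)
    assume "B ! p = (a, True)" "fst k = Suc p mod length B" "B ! p' = (b, True)" "fst k = p'"
    thus False using c1 ab by auto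
  next
    assume "B ! p = (a, True)" "fst k = Suc p mod length B" "B ! p' = (b, False)" "fst k = Suc p' mod length B"
    thus False using inj by auto
  next
    assume "B ! p = (a, False)" "fst k = p" "B ! p' = (b, True)" "fst k = p'"
    thus False by auto
  next
    assume "B ! p = (a, False)" "fst k = p" "B ! p' = (b, False)" "fst k = Suc p' mod length B"
    thus False using c2 ab by auto
  qed
qed

lemma sum_Vg_delta:
  assumes "finite I" "c \<in> Ps s t B x"
  shows "(\<Sum>pw\<in>Vg s t B I x. (if fst pw = c then G (snd pw) else 0)) = (\<Sum>w\<in>I. G w)"
proof -
  have "(\<Sum>pw\<in>Vg s t B I x. (if fst pw = c then G (snd pw) else 0)) =
      (\<Sum>p\<in>Ps s t B x. \<Sum>w\<in>I. (if p = c then G w else 0))"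
    unfolding Vg_def sum.cartesian_product by (rule sum.cong) auto
  also have "\<dots> = (\<Sum>p\<in>Ps s t B x. if p = c then (\<Sum>w\<in>I. G w) else 0)"
    by (rule sum.cong) auto
  also have "\<dots> = (\<Sum>w\<in>I. G w)" by (subst sum.delta[OF finite_Ps]) (simp add: assms)
  finally show ?thesis .
qed

lemma rep_iso_conj:
  fixes W V A :: "'c \<Rightarrow> 'c \<Rightarrow> 'k::field" and \<mu> :: "'c \<Rightarrow> 'k" and s t :: "'a \<Rightarrow> 'v"
  assumes finI: "finite I"
    and WV: "\<And>u' u. u' \<in> I \<Longrightarrow> u \<in> I \<Longrightarrow> mm I W V u' u = idm u' u"
    and VW: "\<And>u' u. u' \<in> I \<Longrightarrow> u \<in> I \<Longrightarrow> mm I V W u' u = idm u' u"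
    and WA: "\<And>u' u. u' \<in> I \<Longrightarrow> u \<in> I \<Longrightarrow> mm I W A u' u = \<mu> u' * W u' u"
  shows "rep_iso Q0 Q1 s t (Vg s t B I) (Mg B A) (Vg s t B I) (Mg B (\<lambda>u' u. if u' = u then \<mu> u' else 0))"
proof -
  define D where "D = (\<lambda>u' u. if u' = u then \<mu> u' else (0::'k))"
  define f :: "'v \<Rightarrow> nat \<times> 'c \<Rightarrow> nat \<times> 'c \<Rightarrow> 'k" where "f x rk cl = (if fst rk = fst cl then W (snd rk) (snd cl) else 0)" for x rk cl
  define g :: "'v \<Rightarrow> nat \<times> 'c \<Rightarrow> nat \<times> 'c \<Rightarrow> 'k" where "g x rk cl = (if fst rk = fst cl then V (snd rk) (snd cl) else 0)" for x rk cl
  have key: "mm I (\<lambda>u' w. ee D p u' w) W u' u = mm I W (\<lambda>w u. ee A p w u) u' u" if "u' \<in> I" "u \<in> I" for p u' u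
  proof (cases "p = 0")
    case True
    have "mm I D W u' u = (\<Sum>w\<in>I. if w = u' then \<mu> u' * W w u else 0)"
      unfolding mm_def D_def by (rule sum.cong) auto
    also have "\<dots> = \<mu> u' * W u' u" using finI that by simp
    finally show ?thesis using True WA that by (simp add: ee_def)
  next
    case False
    have "mm I idm W u' u = W u' u" using finI that by (simp add: mm_idm_left)
    moreover have "mm I W idm u' u = W u' u" using finI that by (simp add: mm_idm_right)
    ultimately show ?thesis using False by (simp add: ee_def)
  qed
  show ?thesis unfolding D_def[symmetric] rep_iso_mm
  proof (rule exI[of _ f], rule exI[of _ g], intro conjI ballI)
    fix x rk cl assume "x \<in> Q0" and rk: "rk \<in> Vg s t B I x" and cl: "cl \<in> Vg s t B I x"
    have "mm (Vg s t B I x) (g x) (f x) rk cl =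
      (\<Sum>pw\<in>Vg s t B I x. if fst pw = fst rk then (if fst rk = fst cl then V (snd rk) (snd pw) * W (snd pw) (snd cl) else 0) else 0)"
      unfolding mm_def f_def g_def by (rule sum.cong) auto
    also have "\<dots> = (\<Sum>w\<in>I. if fst rk = fst cl then V (snd rk) w * W w (snd cl) else 0)"
      using rk by (intro sum_Vg_delta finI) (auto simp: Vg_def)
    also have "\<dots> = (if fst rk = fst cl then mm I V W (snd rk) (snd cl) else 0)"
      unfolding mm_def by simp
    also have "\<dots> = idm rk cl" using rk cl VW by (auto simp: Vg_def idm_def prod_eq_iff)
    finally show "mm (Vg s t B I x) (g x) (f x) rk cl = idm rk cl" .
  next
    fix x rk cl assume "x \<in> Q0" and rk: "rk \<in> Vg s t B I x" and cl: "cl \<in> Vg s t B I x"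
    have "mm (Vg s t B I x) (f x) (g x) rk cl =
      (\<Sum>pw\<in>Vg s t B I x. if fst pw = fst rk then (if fst rk = fst cl then W (snd rk) (snd pw) * V (snd pw) (snd cl) else 0) else 0)"
      unfolding mm_def f_def g_def by (rule sum.cong) auto
    also have "\<dots> = (\<Sum>w\<in>I. if fst rk = fst cl then W (snd rk) w * V w (snd cl) else 0)"
      using rk by (intro sum_Vg_delta finI) (auto simp: Vg_def)
    also have "\<dots> = (if fst rk = fst cl then mm I W V (snd rk) (snd cl) else 0)"
      unfolding mm_def by simp
    also have "\<dots> = idm rk cl" using rk cl WV by (auto simp: Vg_def idm_def prod_eq_iff)
    finally show "mm (Vg s t B I x) (f x) (g x) rk cl = idm rk cl" .
  next
    fix a rk cl assume "a \<in> Q1" and rk: "rk \<in> Vg s t B I (t a)" and cl: "cl \<in> Vg s t B I (s a)"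
    obtain r u' where rk': "rk = (r, u')" by (cases rk)
    obtain c u where cl': "cl = (c, u)" by (cases cl)
    have u': "u' \<in> I" and u: "u \<in> I" and r: "r \<in> Ps s t B (t a)" and c: "c \<in> Ps s t B (s a)"
      using rk cl rk' cl' by (auto simp: Vg_def)
    have "mm (Vg s t B I (s a)) (Mg B D a) (f (s a)) rk cl =
      (\<Sum>pw\<in>Vg s t B I (s a). if fst pw = c then Mg B D a (r, u') (c, snd pw) * W (snd pw) u else 0)"
      unfolding mm_def f_def rk' cl' by (rule sum.cong) auto
    also have "\<dots> = (\<Sum>w\<in>I. Mg B D a (r, u') (c, w) * W w u)"
      by (rule sum_Vg_delta[OF finI c])
    also have "\<dots> = (\<Sum>p<length B. cnd B a p r c * mm I (\<lambda>u' w. ee D p u' w) W u' u)"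
      unfolding Mg_def mm_def by (simp add: sum_distrib_left sum_distrib_right mult.assoc sum.swap[of _ I])
    also have "\<dots> = (\<Sum>p<length B. cnd B a p r c * mm I W (\<lambda>w u. ee A p w u) u' u)"
      using key u u' by simp
    also have "\<dots> = (\<Sum>w\<in>I. W u' w * Mg B A a (r, w) (c, u))"
      unfolding Mg_def mm_def by (simp add: sum_distrib_left sum_distrib_right mult.assoc mult.left_commute sum.swap[of _ I])
    also have "\<dots> = (\<Sum>pw\<in>Vg s t B I (t a). if fst pw = r then W u' (snd pw) * Mg B A a (r, snd pw) (c, u) else 0)"
      by (rule sum_Vg_delta[OF finI r, symmetric])
    also have "\<dots> = mm (Vg s t B I (t a)) (f (t a)) (Mg B A a) rk cl"
      unfolding mm_def f_def rk' cl' by (rule sum.cong) auto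
    finally show "mm (Vg s t B I (s a)) (Mg B D a) (f (s a)) rk cl = mm (Vg s t B I (t a)) (f (t a)) (Mg B A a) rk cl" .
  qed
qed




definition Ab :: "(nat \<Rightarrow> 'k::field) \<Rightarrow> nat \<Rightarrow> nat \<Rightarrow> 'k" where
  "Ab \<mu> k' k = (if k' = k then \<mu> k else if k = Suc k' then 1 else 0)"

definition Vb :: "(nat \<Rightarrow> 'k::field) \<Rightarrow> nat \<Rightarrow> nat \<Rightarrow> 'k" where
  "Vb \<mu> k i = (if k \<le> i then (\<Prod>l\<in>{k..<i}. 1 / (\<mu> i - \<mu> l)) else 0)"

definition Wb :: "(nat \<Rightarrow> 'k::field) \<Rightarrow> nat \<Rightarrow> nat \<Rightarrow> 'k" where
  "Wb \<mu> i k = (if i \<le> k then (\<Prod>l\<in>{i<..k}. 1 / (\<mu> i - \<mu> l)) else 0)"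

lemma Ab_left: "k < n \<Longrightarrow> (\<Sum>l<n. Ab \<mu> k l * X l) = \<mu> k * X k + (if Suc k < n then X (Suc k) else 0)"
proof -
  assume k: "k < n"
  have "(\<Sum>l<n. Ab \<mu> k l * X l) = (\<Sum>l<n. (if l = k then \<mu> k * X l else 0) + (if l = Suc k then X l else 0))"
    unfolding Ab_def by (rule sum.cong) auto
  also have "\<dots> = \<mu> k * X k + (if Suc k < n then X (Suc k) else 0)"
    using k by (simp add: sum.distrib)
  finally show ?thesis .
qed

lemma Ab_right: "k < n \<Longrightarrow> (\<Sum>l<n. X l * Ab \<mu> l k) = X k * \<mu> k + (if 0 < k then X (k - 1) else 0)"
proof -
  assume k: "k < n"
  have "(\<Sum>l<n. X l * Ab \<mu> l k) = (\<Sum>l<n. (if l = k then X l * \<mu> k else 0) + (if 0 < k \<and> l = k - 1 then X l else 0))"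
    unfolding Ab_def by (rule sum.cong) auto
  also have "\<dots> = X k * \<mu> k + (if 0 < k then X (k - 1) else 0)"
    using k by (simp add: sum.distrib)
  finally show ?thesis .
qed

context
  fixes n :: nat and \<mu> :: "nat \<Rightarrow> 'k::field"
  assumes inj: "inj_on \<mu> {..<n}"
begin

lemma Vb_step: "k < i \<Longrightarrow> i < n \<Longrightarrow> Vb \<mu> (Suc k) i = (\<mu> i - \<mu> k) * Vb \<mu> k i"
proof -
  assume ki: "k < i" "i < n"
  have ne: "\<mu> i - \<mu> k \<noteq> 0" using inj ki by (auto dest: inj_onD)
  have "{k..<i} = insert k {Suc k..<i}" using ki by auto
  hence "Vb \<mu> k i = 1 / (\<mu> i - \<mu> k) * Vb \<mu> (Suc k) i" unfolding Vb_def using ki by simp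
  thus ?thesis using ne by simp
qed

lemma Wb_step: "i < k \<Longrightarrow> k < n \<Longrightarrow> Wb \<mu> i (k - 1) = (\<mu> i - \<mu> k) * Wb \<mu> i k"
proof -
  assume ki: "i < k" "k < n"
  have ne: "\<mu> i - \<mu> k \<noteq> 0" using inj ki by (auto dest: inj_onD)
  have "{i<..k} = insert k {i<..k - 1}" using ki by auto
  moreover have "i \<le> k - 1" using ki by simp
  ultimately have "Wb \<mu> i k = 1 / (\<mu> i - \<mu> k) * Wb \<mu> i (k - 1)" unfolding Wb_def using ki by simp
  thus ?thesis using ne by simp
qed

lemma AV: "k < n \<Longrightarrow> i < n \<Longrightarrow> (\<Sum>l<n. Ab \<mu> k l * Vb \<mu> l i) = \<mu> i * Vb \<mu> k i"
proof -
  assume k: "k < n" and i: "i < n"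
  have "(\<Sum>l<n. Ab \<mu> k l * Vb \<mu> l i) = \<mu> k * Vb \<mu> k i + (if Suc k < n then Vb \<mu> (Suc k) i else 0)"
    using k by (rule Ab_left)
  also have "\<dots> = \<mu> i * Vb \<mu> k i"
  proof (cases "k < i")
    case True
    thus ?thesis using Vb_step[OF True i] i by (simp add: algebra_simps)
  next
    case False
    thus ?thesis by (cases "k = i") (auto simp: Vb_def)
  qed
  finally show ?thesis .
qed

lemma WA: "i < n \<Longrightarrow> k < n \<Longrightarrow> (\<Sum>l<n. Wb \<mu> i l * Ab \<mu> l k) = \<mu> i * Wb \<mu> i k"
proof -
  assume i: "i < n" and k: "k < n"
  have "(\<Sum>l<n. Wb \<mu> i l * Ab \<mu> l k) = Wb \<mu> i k * \<mu> k + (if 0 < k then Wb \<mu> i (k - 1) else 0)"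
    using k by (rule Ab_right)
  also have "\<dots> = \<mu> i * Wb \<mu> i k"
  proof (cases "i < k")
    case True
    thus ?thesis using Wb_step[OF True k] by (simp add: algebra_simps)
  next
    case False
    thus ?thesis by (cases "k = i") (auto simp: Wb_def)
  qed
  finally show ?thesis .
qed

lemma WV: "i < n \<Longrightarrow> k < n \<Longrightarrow> (\<Sum>l<n. Wb \<mu> i l * Vb \<mu> l k) = idm i k"
proof -
  assume i: "i < n" and k: "k < n"
  consider "i < k" | "i = k" | "k < i" by linarith
  thus ?thesis
  proof cases
    case 1
    define S where "S = (\<Sum>l<n. Wb \<mu> i l * Vb \<mu> l k)"
    have "(\<Sum>l<n. Wb \<mu> i l * (\<Sum>m<n. Ab \<mu> l m * Vb \<mu> m k)) = (\<Sum>l<n. \<Sum>m<n. Wb \<mu> i l * Ab \<mu> l m * Vb \<mu> m k)"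
      by (simp add: sum_distrib_left mult.assoc)
    also have "\<dots> = (\<Sum>m<n. \<Sum>l<n. Wb \<mu> i l * Ab \<mu> l m * Vb \<mu> m k)"
      by (rule sum.swap)
    also have "\<dots> = (\<Sum>m<n. (\<Sum>l<n. Wb \<mu> i l * Ab \<mu> l m) * Vb \<mu> m k)"
      by (simp add: sum_distrib_right)
    finally have "(\<Sum>l<n. Wb \<mu> i l * (\<Sum>m<n. Ab \<mu> l m * Vb \<mu> m k)) = (\<Sum>m<n. (\<Sum>l<n. Wb \<mu> i l * Ab \<mu> l m) * Vb \<mu> m k)" .
    moreover have "(\<Sum>l<n. Wb \<mu> i l * (\<Sum>m<n. Ab \<mu> l m * Vb \<mu> m k)) = \<mu> k * S"
      unfolding S_def using AV k by (simp add: sum_distrib_left mult.left_commute)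
    moreover have "(\<Sum>m<n. (\<Sum>l<n. Wb \<mu> i l * Ab \<mu> l m) * Vb \<mu> m k) = \<mu> i * S"
      unfolding S_def using WA i by (simp add: sum_distrib_left mult.assoc)
    ultimately have "(\<mu> k - \<mu> i) * S = 0" by (simp add: algebra_simps)
    moreover have "\<mu> k \<noteq> \<mu> i" using inj 1 i k by (auto dest: inj_onD)
    ultimately have "S = 0" by simp
    thus ?thesis using 1 unfolding S_def idm_def by simp
  next
    case 2
    have "(\<Sum>l<n. Wb \<mu> i l * Vb \<mu> l k) = (\<Sum>l<n. if l = i then 1 else 0)"
      using 2 by (intro sum.cong) (auto simp: Wb_def Vb_def)
    thus ?thesis using 2 i by (simp add: idm_def)
  next
    case 3
    have "(\<Sum>l<n. Wb \<mu> i l * Vb \<mu> l k) = (\<Sum>l<n. 0)"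
      using 3 by (intro sum.cong) (auto simp: Wb_def Vb_def)
    thus ?thesis using 3 by (simp add: idm_def)
  qed
qed

lemma tri_zero:
  assumes h: "\<And>i. i < n \<Longrightarrow> (\<Sum>l<n. E l * Vb \<mu> l i) = 0"
  shows "l < n \<Longrightarrow> E l = (0::'k)"
proof (induction l rule: less_induct)
  case (less i)
  have "(\<Sum>l<n. E l * Vb \<mu> l i) = (\<Sum>l<n. if l = i then E i else 0)"
  proof (rule sum.cong)
    fix l assume l: "l \<in> {..<n}"
    show "E l * Vb \<mu> l i = (if l = i then E i else 0)"
      using less l by (cases "l < i") (auto simp: Vb_def)
  qed simp
  thus ?case using h[OF less.prems] less.prems by simp
qed

lemma VW: "i < n \<Longrightarrow> k < n \<Longrightarrow> (\<Sum>l<n. Vb \<mu> i l * Wb \<mu> l k) = idm i k"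
proof -
  assume i: "i < n" and k: "k < n"
  define E where "E l = (\<Sum>m<n. Vb \<mu> i m * Wb \<mu> m l) - idm i l" for l
  have "E l = 0" if "l < n" for l
  proof (rule tri_zero[OF _ that])
    fix j assume j: "j < n"
    have e1: "(\<Sum>l<n. E l * Vb \<mu> l j) = (\<Sum>l<n. (\<Sum>m<n. Vb \<mu> i m * Wb \<mu> m l) * Vb \<mu> l j) - (\<Sum>l<n. idm i l * Vb \<mu> l j)"
      unfolding E_def by (simp add: left_diff_distrib sum_subtractf)
    have "(\<Sum>l<n. (\<Sum>m<n. Vb \<mu> i m * Wb \<mu> m l) * Vb \<mu> l j) = (\<Sum>l<n. \<Sum>m<n. Vb \<mu> i m * Wb \<mu> m l * Vb \<mu> l j)"
      by (simp add: sum_distrib_right)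
    also have "\<dots> = (\<Sum>m<n. \<Sum>l<n. Vb \<mu> i m * Wb \<mu> m l * Vb \<mu> l j)"
      by (rule sum.swap)
    also have "\<dots> = (\<Sum>m<n. Vb \<mu> i m * (\<Sum>l<n. Wb \<mu> m l * Vb \<mu> l j))"
      by (simp add: sum_distrib_left mult.assoc)
    also have "\<dots> = (\<Sum>m<n. Vb \<mu> i m * idm m j)"
      using WV j by (intro sum.cong) auto
    also have "\<dots> = (\<Sum>m<n. if m = j then Vb \<mu> i m else 0)"
      unfolding idm_def by (rule sum.cong) auto
    also have "\<dots> = Vb \<mu> i j" using j by simp
    finally have e2: "(\<Sum>l<n. (\<Sum>m<n. Vb \<mu> i m * Wb \<mu> m l) * Vb \<mu> l j) = Vb \<mu> i j" .
    have "(\<Sum>l<n. idm i l * Vb \<mu> l j) = (\<Sum>l<n. if l = i then Vb \<mu> l j else 0)"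
      unfolding idm_def by (rule sum.cong) auto
    hence e3: "(\<Sum>l<n. idm i l * Vb \<mu> l j) = Vb \<mu> i j" using i by simp
    show "(\<Sum>l<n. E l * Vb \<mu> l j) = 0" using e1 e2 e3 by simp
  qed
  thus ?thesis using k unfolding E_def by simp
qed

end




definition Iq :: "nat list \<Rightarrow> (nat \<times> nat) set" where
  "Iq qs = (SIGMA j:{..<length qs}. {..<qs ! j})"

definition liftb :: "(nat \<Rightarrow> nat \<Rightarrow> nat \<Rightarrow> 'k::field) \<Rightarrow> nat \<times> nat \<Rightarrow> nat \<times> nat \<Rightarrow> 'k" where
  "liftb F u' u = (if fst u' = fst u then F (fst u) (snd u') (snd u) else 0)"

lemma finite_Iq: "finite (Iq qs)" unfolding Iq_def by auto

lemma sum_Iq_block: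
  assumes j: "j < length qs" and z: "\<And>u. u \<in> Iq qs \<Longrightarrow> fst u \<noteq> j \<Longrightarrow> G u = 0"
  shows "(\<Sum>u\<in>Iq qs. G u) = (\<Sum>k<qs ! j. G (j, k))"
proof -
  have sub: "Pair j ` {..<qs ! j} \<subseteq> Iq qs" using j unfolding Iq_def by auto
  have "(\<Sum>u\<in>Iq qs. G u) = (\<Sum>u\<in>Pair j ` {..<qs ! j}. G u)"
    by (rule sum.mono_neutral_right[OF finite_Iq sub]) (use z in \<open>force simp: Iq_def\<close>)
  also have "\<dots> = (\<Sum>k<qs ! j. G (j, k))" by (subst sum.reindex) (auto simp: inj_on_def)
  finally show ?thesis .
qed

lemma mm_liftb:
  assumes "(j, i) \<in> Iq qs" "(j', k) \<in> Iq qs"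
  shows "mm (Iq qs) (liftb F) (liftb G) (j, i) (j', k) = (if j = j' then (\<Sum>l<qs ! j. F j i l * G j l k) else 0)"
proof (cases "j = j'")
  case True
  have "mm (Iq qs) (liftb F) (liftb G) (j, i) (j', k) = (\<Sum>l<qs ! j. liftb F (j, i) (j, l) * liftb G (j, l) (j', k))"
    unfolding mm_def using assms(1) by (intro sum_Iq_block) (auto simp: Iq_def liftb_def)
  thus ?thesis using True by (simp add: liftb_def)
next
  case False
  have "mm (Iq qs) (liftb F) (liftb G) (j, i) (j', k) = 0"
    unfolding mm_def liftb_def using False by (intro sum.neutral) auto
  thus ?thesis using False by simp
qed

lemma conj_blocks:
  fixes \<mu> :: "nat \<Rightarrow> nat \<Rightarrow> 'k::field" and s t :: "'a \<Rightarrow> 'v"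
  assumes inj: "\<And>j. j < length qs \<Longrightarrow> inj_on (\<mu> j) {..<qs ! j}"
  shows "rep_iso Q0 Q1 s t (Vg s t B (Iq qs)) (Mg B (liftb (\<lambda>j. Ab (\<mu> j)))) (Vg s t B (Iq qs))
           (Mg B (\<lambda>u' u. if u' = u then \<mu> (fst u') (snd u') else 0))"
proof (rule rep_iso_conj[where W = "liftb (\<lambda>j. Wb (\<mu> j))" and V = "liftb (\<lambda>j. Vb (\<mu> j))"])
  show "finite (Iq qs)" by (rule finite_Iq)
next
  fix u' u assume u': "u' \<in> Iq qs" and u: "u \<in> Iq qs"
  obtain j i where ji: "u' = (j, i)" by (cases u')
  obtain j' k where jk: "u = (j', k)" by (cases u)
  have "j < length qs" "i < qs ! j" "k < qs ! j'" using u' u ji jk by (auto simp: Iq_def)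
  thus "mm (Iq qs) (liftb (\<lambda>j. Wb (\<mu> j))) (liftb (\<lambda>j. Vb (\<mu> j))) u' u = idm u' u"
    using u u' unfolding ji jk by (auto simp: mm_liftb WV[OF inj] idm_def)
next
  fix u' u assume u': "u' \<in> Iq qs" and u: "u \<in> Iq qs"
  obtain j i where ji: "u' = (j, i)" by (cases u')
  obtain j' k where jk: "u = (j', k)" by (cases u)
  have "j < length qs" "i < qs ! j" "k < qs ! j'" using u' u ji jk by (auto simp: Iq_def)
  thus "mm (Iq qs) (liftb (\<lambda>j. Vb (\<mu> j))) (liftb (\<lambda>j. Wb (\<mu> j))) u' u = idm u' u"
    using u u' unfolding ji jk by (auto simp: mm_liftb VW[OF inj] idm_def)
next
  fix u' u assume u': "u' \<in> Iq qs" and u: "u \<in> Iq qs"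
  obtain j i where ji: "u' = (j, i)" by (cases u')
  obtain j' k where jk: "u = (j', k)" by (cases u)
  have "j < length qs" "i < qs ! j" "k < qs ! j'" using u' u ji jk by (auto simp: Iq_def)
  thus "mm (Iq qs) (liftb (\<lambda>j. Wb (\<mu> j))) (liftb (\<lambda>j. Ab (\<mu> j))) u' u = \<mu> (fst u') (snd u') * liftb (\<lambda>j. Wb (\<mu> j)) u' u"
    using u u' unfolding ji jk by (auto simp: mm_liftb WA[OF inj] liftb_def)
qed

lemma bandM_Mg: "bandM B lam a (r, k') (c, k) = Mg B (jordan lam) a (r, k') (c, k)"
  unfolding bandM_def Mg_def
  apply (simp only: Let_def prod.case fst_conv snd_conv)
  apply (rule sum.cong, rule refl)
  apply (simp only: cnd_def ee_def idm_def distrib_right if_distrib[of "\<lambda>x. x * _"] mult_1_left mult_zero_left)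
  done

lemma reindex1:
  fixes s t :: "'a \<Rightarrow> 'v" and ls :: "'k::field list"
  shows "rep_iso Q0 Q1 s t (bsumV s t B qs) (bsumM B ls) (Vg s t B (Iq qs)) (Mg B (liftb (\<lambda>j. jordan (ls ! j))))"
proof (rule rep_iso_reindex[where \<phi> = "\<lambda>(p, j, k). (j, p, k)"])
  fix x
  show "bij_betw (\<lambda>(p, j, k). (j, p, k)) (Vg s t B (Iq qs) x) (bsumV s t B qs x)"
    by (rule bij_betw_byWitness[where f' = "\<lambda>(j, p, k). (p, j, k)"])
       (auto simp: Vg_def Ps_def Iq_def bsumV_def bandV_def)
  show "finite (Vg s t B (Iq qs) x)" by (rule finite_Vg[OF finite_Iq])
next
  fix a and rk cl :: "nat \<times> nat \<times> nat"
  assume "a \<in> Q1" "rk \<in> Vg s t B (Iq qs) (t a)" "cl \<in> Vg s t B (Iq qs) (s a)"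
  obtain r j' k' where rk: "rk = (r, j', k')" by (cases rk) auto
  obtain c j k where cl: "cl = (c, j, k)" by (cases cl) auto
  have "Mg B (liftb (\<lambda>j. jordan (ls ! j))) a (r, j', k') (c, j, k) = bsumM B ls a (j', r, k') (j, c, k)"
  proof (cases "j' = j")
    case True
    have "ee (liftb (\<lambda>j. jordan (ls ! j))) p (j, k') (j, k) = ee (jordan (ls ! j)) p k' k" for p
      by (simp add: ee_def liftb_def idm_def)
    hence "Mg B (liftb (\<lambda>j. jordan (ls ! j))) a (r, j', k') (c, j, k) = Mg B (jordan (ls ! j)) a (r, k') (c, k)"
      unfolding Mg_def using True by simp
    also have "\<dots> = bsumM B ls a (j', r, k') (j, c, k)"
      using True by (simp add: bsumM_def bandM_Mg)
    finally show ?thesis .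
  next
    case False
    have "Mg B (liftb (\<lambda>j. jordan (ls ! j))) a (r, j', k') (c, j, k) = 0"
      unfolding Mg_def by (rule sum.neutral) (use False in \<open>simp add: ee_def liftb_def idm_def\<close>)
    thus ?thesis using False by (simp add: bsumM_def)
  qed
  thus "Mg B (liftb (\<lambda>j. jordan (ls ! j))) a rk cl = bsumM B ls a ((\<lambda>(p, j, k). (j, p, k)) rk) ((\<lambda>(p, j, k). (j, p, k)) cl)"
    using rk cl by simp
qed

lemma reindex2:
  fixes s t :: "'a \<Rightarrow> 'v" and \<mu> :: "nat \<times> nat \<Rightarrow> 'k::field"
  assumes \<psi>: "bij_betw \<psi> {..<q} I" and finI: "finite I"
  shows "rep_iso Q0 Q1 s t (Vg s t B I) (Mg B (\<lambda>u' u. if u' = u then \<mu> u' else 0))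
     (bsumV s t B (replicate q 1)) (bsumM B (map (\<lambda>i. \<mu> (\<psi> i)) [0..<q]))"
proof (rule rep_iso_reindex[where \<phi> = "\<lambda>(i, p, k). (p, \<psi> i)"])
  fix x
  show "bij_betw (\<lambda>(i, p, k). (p, \<psi> i)) (bsumV s t B (replicate q 1) x) (Vg s t B I x)"
    apply (rule bij_betw_byWitness[where f' = "\<lambda>(p, u). (inv_into {..<q} \<psi> u, p, 0)"])
    using \<psi> by (auto simp: Vg_def Ps_def bsumV_def bandV_def bij_betw_def inv_into_into)
  have "bsumV s t B (replicate q 1) x \<subseteq> {..<q} \<times> ({..<length B} \<times> {0})"
    by (auto simp: bsumV_def bandV_def)
  thus "finite (bsumV s t B (replicate q 1) x)" by (rule finite_subset) auto
next
  fix a and rk cl :: "nat \<times> nat \<times> nat"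
  assume "a \<in> Q1" and rk: "rk \<in> bsumV s t B (replicate q 1) (t a)" and cl: "cl \<in> bsumV s t B (replicate q 1) (s a)"
  obtain i' r k' where rk': "rk = (i', r, k')" by (cases rk) auto
  obtain i c k where cl': "cl = (i, c, k)" by (cases cl) auto
  have ii: "i' < q" "i < q" "k' = 0" "k = 0" using rk cl rk' cl' by (auto simp: bsumV_def bandV_def)
  have inj: "\<psi> i' = \<psi> i \<longleftrightarrow> i' = i" using \<psi> ii unfolding bij_betw_def inj_on_def by auto
  have "bsumM B (map (\<lambda>i. \<mu> (\<psi> i)) [0..<q]) a (i', r, k') (i, c, k) = Mg B (\<lambda>u' u. if u' = u then \<mu> u' else 0) a (r, \<psi> i') (c, \<psi> i)"
  proof (cases "i' = i")
    case True
    have "ee (\<lambda>u' u. if u' = u then \<mu> u' else 0) p (\<psi> i) (\<psi> i) = ee (jordan (\<mu> (\<psi> i))) p 0 0" for p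
      by (simp add: ee_def idm_def jordan_def)
    hence "Mg B (\<lambda>u' u. if u' = u then \<mu> u' else 0) a (r, \<psi> i') (c, \<psi> i) = Mg B (jordan (\<mu> (\<psi> i))) a (r, 0) (c, 0)"
      unfolding Mg_def using True by simp
    also have "\<dots> = bsumM B (map (\<lambda>i. \<mu> (\<psi> i)) [0..<q]) a (i', r, k') (i, c, k)"
      using True ii by (simp add: bsumM_def bandM_Mg)
    finally show ?thesis by simp
  next
    case False
    have "Mg B (\<lambda>u' u. if u' = u then \<mu> u' else 0) a (r, \<psi> i') (c, \<psi> i) = 0"
      unfolding Mg_def by (rule sum.neutral) (use False inj in \<open>simp add: ee_def idm_def\<close>)
    thus ?thesis using False by (simp add: bsumM_def)
  qed
  thus "bsumM B (map (\<lambda>i. \<mu> (\<psi> i)) [0..<q]) a rk cl = Mg B (\<lambda>u' u. if u' = u then \<mu> u' else 0) a ((\<lambda>(i, p, k). (p, \<psi> i)) rk) ((\<lambda>(i, p, k). (p, \<psi> i)) cl)"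
    using rk' cl' by simp
qed




definition ispoly :: "('k::field \<Rightarrow> 'k) \<Rightarrow> bool" where
  "ispoly F \<longleftrightarrow> (\<exists>P. \<forall>x. F x = poly P x)"

lemma ispoly_const: "ispoly (\<lambda>x. c)"
  unfolding ispoly_def by (rule exI[of _ "[:c:]"]) simp

lemma ispoly_id: "ispoly (\<lambda>x. x)"
  unfolding ispoly_def by (rule exI[of _ "[:0, 1:]"]) simp

lemma ispoly_add: "ispoly F \<Longrightarrow> ispoly G \<Longrightarrow> ispoly (\<lambda>x. F x + G x)"
  unfolding ispoly_def by (metis poly_add)

lemma ispoly_mult: "ispoly F \<Longrightarrow> ispoly G \<Longrightarrow> ispoly (\<lambda>x. F x * G x)"
  unfolding ispoly_def by (metis poly_mult)

lemma ispoly_sum: "(\<And>i. i \<in> S \<Longrightarrow> ispoly (F i)) \<Longrightarrow> ispoly (\<lambda>x. \<Sum>i\<in>S. F i x)"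
proof (induction S rule: infinite_finite_induct)
  case (infinite A) thus ?case by (simp add: ispoly_const)
next
  case empty thus ?case by (simp add: ispoly_const)
next
  case (insert a A) thus ?case by (simp add: ispoly_add)
qed

lemma ispoly_if: "ispoly F \<Longrightarrow> ispoly G \<Longrightarrow> ispoly (\<lambda>x. if b then F x else G x)"
  by (cases b) auto

lemma ispoly_mm: "(\<And>k. k \<in> S \<Longrightarrow> ispoly (\<lambda>x. A x r k)) \<Longrightarrow> (\<And>k. k \<in> S \<Longrightarrow> ispoly (\<lambda>x. C x k c)) \<Longrightarrow>
   ispoly (\<lambda>x. mm S (A x) (C x) r c)"
  unfolding mm_def by (intro ispoly_sum ispoly_mult) auto

lemma zpoly_ispoly:
  assumes "h \<in> zpoly" and "\<And>a j i. ispoly (\<lambda>x. Y x a j i)"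
  shows "ispoly (\<lambda>x. h (Y x))"
  using assms by (induction rule: zpoly.induct) (auto intro: ispoly_const ispoly_add ispoly_mult)

lemma ispoly_zero:
  assumes "ispoly F" and "infinite {x. F x = 0}"
  shows "F y = 0"
proof -
  obtain P where P: "\<And>x. F x = poly P x" using assms(1) unfolding ispoly_def by blast
  have "P = 0" using assms(2) poly_roots_finite[of P] unfolding P by auto
  thus ?thesis using P by simp
qed




lemma sandwich_id:
  assumes finS: "finite S" and fg: "\<And>k1 k2. k1 \<in> S \<Longrightarrow> k2 \<in> S \<Longrightarrow> mm D F G k1 k2 = idm k1 k2"
    and k: "k \<in> S"
  shows "mm D F (mm S3 (mm S G N) F3) k c = mm S3 N F3 k c"
proof -
  have "mm D F (mm S3 (mm S G N) F3) = mm S3 (mm S (mm D F G) N) F3"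
    by (simp add: mm_assoc)
  moreover have "mm S3 (mm S (mm D F G) N) F3 k c = mm S3 N F3 k c"
  proof (rule mm_cong)
    fix m assume "m \<in> S3"
    have "mm S (mm D F G) N k m = mm S idm N k m" by (rule mm_cong) (use fg k in auto)
    also have "\<dots> = N k m" using finS k by (rule mm_idm_left)
    finally show "mm S (mm D F G) N k m = N k m" .
  qed simp
  ultimately show ?thesis by simp
qed

lemma mm_zero_left: "(\<And>k k'. A k k' = 0) \<Longrightarrow> mm S A C r c = 0"
  unfolding mm_def by simp

lemma sandwich_zero:
  assumes finS: "finite S" and fg: "\<And>k1 k2. k1 \<in> S \<Longrightarrow> k2 \<in> S \<Longrightarrow> mm D F G k1 k2 = idm k1 k2"
    and NN: "\<And>k k'. mm S N1 N2 k k' = 0"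
  shows "mm D (mm S (mm S1 G1 N1) F) (mm S3 (mm S G N2) F3) r c = 0"
proof -
  have "mm D (mm S (mm S1 G1 N1) F) (mm S3 (mm S G N2) F3) r c = mm S (mm S1 G1 N1) (mm D F (mm S3 (mm S G N2) F3)) r c"
    by (simp add: mm_assoc)
  also have "\<dots> = mm S (mm S1 G1 N1) (mm S3 N2 F3) r c"
    by (rule mm_cong) (auto intro: sandwich_id[OF finS fg])
  also have "\<dots> = mm S1 G1 (mm S3 (mm S N1 N2) F3) r c"
    by (simp add: mm_assoc)
  also have "\<dots> = 0"
    unfolding mm_def[of S1] by (rule sum.neutral) (simp add: mm_zero_left NN)
  finally show ?thesis .
qed

lemma key:
  fixes s t :: "'a \<Rightarrow> 'v" and X :: "'a \<Rightarrow> nat \<Rightarrow> nat \<Rightarrow> 'k::alg_closed_field" and ls :: "'k list"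
    and d :: "'v \<Rightarrow> nat"
  assumes Qs: "s ` Q1 \<subseteq> Q0" and Qt: "t ` Q1 \<subseteq> Q0"
    and RQ: "R \<subseteq> {(a, b). a \<in> Q1 \<and> b \<in> Q1 \<and> t a = s b}"
    and band: "is_band Q1 s t R B"
    and qs: "sum_list qs = q" and lls: "length ls = length qs" and ls0: "0 \<notin> set ls"
    and X: "X \<in> orbit Q0 Q1 s t R d (bsumV s t B qs) (bsumM B ls)"
  shows "X \<in> zclosure (modvar Q1 s t R d)
     (\<Union>{orbit Q0 Q1 s t R d (bsumV s t B (replicate q 1)) (bsumM B ls') | ls' :: 'k list. length ls' = q \<and> 0 \<notin> set ls'})"
proof -
  define I where "I = Iq qs"
  define W where "W = Vg s t B I"
  have finI: "finite I" unfolding I_def by (rule finite_Iq)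
  have finW: "\<And>x. finite (W x)" unfolding W_def by (rule finite_Vg[OF finI])
  have Xmod: "X \<in> modvar Q1 s t R d" and Xiso: "rep_iso Q0 Q1 s t (\<lambda>x. {..<d x}) X (bsumV s t B qs) (bsumM B ls)"
    using X unfolding orbit_def by auto
  have finB: "finite (bsumV s t B qs x)" for x
  proof (rule finite_subset)
    show "bsumV s t B qs x \<subseteq> (SIGMA j:{..<length qs}. {..<length B} \<times> {..<qs ! j})"
      by (auto simp: bsumV_def bandV_def)
  qed auto
  have iso1: "rep_iso Q0 Q1 s t (\<lambda>x. {..<d x}) X W (Mg B (liftb (\<lambda>j. jordan (ls ! j))))"
    unfolding W_def I_def by (rule rep_iso_trans[OF finB Xiso reindex1])
  then obtain f g where
    fg1: "\<forall>x\<in>Q0. (\<forall>r\<in>{..<d x}. \<forall>c\<in>{..<d x}. mm (W x) (g x) (f x) r c = idm r c) \<and>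
                (\<forall>r\<in>W x. \<forall>c\<in>W x. mm {..<d x} (f x) (g x) r c = idm r c)"
    and fg2: "\<forall>a\<in>Q1. \<forall>r\<in>W (t a). \<forall>c\<in>{..<d (s a)}.
          mm (W (s a)) (Mg B (liftb (\<lambda>j. jordan (ls ! j))) a) (f (s a)) r c = mm {..<d (t a)} (f (t a)) (X a) r c"
    unfolding rep_iso_mm by blast
  have inv1: "\<And>x r c. x \<in> Q0 \<Longrightarrow> r < d x \<Longrightarrow> c < d x \<Longrightarrow> mm (W x) (g x) (f x) r c = idm r c"
    using fg1 by auto
  have inv2: "\<And>x r c. x \<in> Q0 \<Longrightarrow> r \<in> W x \<Longrightarrow> c \<in> W x \<Longrightarrow> mm {..<d x} (f x) (g x) r c = idm r c"
    using fg1 by auto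
  have intw: "\<And>a r c. a \<in> Q1 \<Longrightarrow> r \<in> W (t a) \<Longrightarrow> c < d (s a) \<Longrightarrow>
        mm (W (s a)) (Mg B (liftb (\<lambda>j. jordan (ls ! j))) a) (f (s a)) r c = mm {..<d (t a)} (f (t a)) (X a) r c"
    using fg2 by auto
  obtain cc :: "nat \<Rightarrow> 'k" where cc: "inj cc"
    using infinite_iff_countable_subset[THEN iffD1, OF alg_closed_infinite[where 'k = 'k]] by blast
  define \<mu>t where "\<mu>t \<tau> j k = ls ! j + \<tau> * cc k" for \<tau> j k
  define At where "At \<tau> = liftb (\<lambda>j. Ab (\<mu>t \<tau> j))" for \<tau>
  define Xt where "Xt \<tau> a r c = (if a \<in> Q1 \<and> r < d (t a) \<and> c < d (s a) then
      mm (W (s a)) (mm (W (t a)) (g (t a)) (Mg B (At \<tau>) a)) (f (s a)) r c else 0)" for \<tau> a r c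
  have At0: "At 0 = liftb (\<lambda>j. jordan (ls ! j))"
    by (intro ext) (simp add: At_def \<mu>t_def Ab_def jordan_def liftb_def)
  have X0: "Xt 0 = X"
  proof (intro ext)
    fix a r c
    show "Xt 0 a r c = X a r c"
    proof (cases "a \<in> Q1 \<and> r < d (t a) \<and> c < d (s a)")
      case True
      hence a: "a \<in> Q1" and r: "r < d (t a)" and c: "c < d (s a)" by auto
      have ta: "t a \<in> Q0" using Qt a by auto
      have "Xt 0 a r c = mm (W (t a)) (g (t a)) (mm (W (s a)) (Mg B (At 0) a) (f (s a))) r c"
        using True unfolding Xt_def by (simp add: mm_assoc)
      also have "\<dots> = mm (W (t a)) (g (t a)) (mm {..<d (t a)} (f (t a)) (X a)) r c"
        by (rule mm_cong) (use intw a c At0 in auto)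
      also have "\<dots> = mm {..<d (t a)} (mm (W (t a)) (g (t a)) (f (t a))) (X a) r c"
        by (simp add: mm_assoc)
      also have "\<dots> = mm {..<d (t a)} idm (X a) r c"
        by (rule mm_cong) (use inv1 ta r in auto)
      also have "\<dots> = X a r c" using r by (intro mm_idm_left) auto
      finally show ?thesis .
    next
      case False
      thus ?thesis using Xmod unfolding Xt_def modvar_def by auto
    qed
  qed
  have Xt_mod: "Xt \<tau> \<in> modvar Q1 s t R d" for \<tau>
    unfolding modvar_def
  proof (intro CollectI conjI allI impI ballI)
    fix a j i assume "a \<notin> Q1 \<or> d (t a) \<le> j \<or> d (s a) \<le> i"
    thus "Xt \<tau> a j i = 0" unfolding Xt_def by auto
  next
    fix ab assume ab: "ab \<in> R"
    obtain a b where abe: "ab = (a, b)" by (cases ab)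
    have a: "a \<in> Q1" and b: "b \<in> Q1" and tasb: "t a = s b" using RQ ab abe by auto
    have ta: "t a \<in> Q0" using Qt a by auto
    show "case ab of (a, b) \<Rightarrow> \<forall>r<d (t b). \<forall>c<d (s a). (\<Sum>k<d (t a). Xt \<tau> b r k * Xt \<tau> a k c) = 0"
      unfolding abe prod.case
    proof (intro allI impI)
      fix r c assume r: "r < d (t b)" and c: "c < d (s a)"
      have "(\<Sum>k<d (t a). Xt \<tau> b r k * Xt \<tau> a k c) =
          mm {..<d (t a)} (mm (W (t a)) (mm (W (t b)) (g (t b)) (Mg B (At \<tau>) b)) (f (t a)))
             (mm (W (s a)) (mm (W (t a)) (g (t a)) (Mg B (At \<tau>) a)) (f (s a))) r c"
        unfolding mm_def[of "{..<d (t a)}"] by (rule sum.cong) (use a b r c tasb in \<open>auto simp: Xt_def\<close>)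
      also have "\<dots> = 0"
      proof (rule sandwich_zero[OF finW])
        show "\<And>k1 k2. k1 \<in> W (t a) \<Longrightarrow> k2 \<in> W (t a) \<Longrightarrow> mm {..<d (t a)} (f (t a)) (g (t a)) k1 k2 = idm k1 k2"
          using inv2 ta by auto
        show "\<And>k k'. mm (W (t a)) (Mg B (At \<tau>) b) (Mg B (At \<tau>) a) k k' = 0"
        proof -
          fix k k'
          have abR: "(a, b) \<in> R" using ab abe by simp
          show "mm (W (t a)) (Mg B (At \<tau>) b) (Mg B (At \<tau>) a) k k' = 0"
            unfolding mm_def by (rule sum.neutral) (simp add: Mg_rel[OF band abR])
        qed
      qed
      finally show "(\<Sum>k<d (t a). Xt \<tau> b r k * Xt \<tau> a k c) = 0" .
    qed
  qed
  have Xt_iso: "rep_iso Q0 Q1 s t (\<lambda>x. {..<d x}) (Xt \<tau>) W (Mg B (At \<tau>))" for \<tau>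
    unfolding rep_iso_mm
  proof (rule exI[of _ f], rule exI[of _ g], intro conjI ballI)
    fix x r c assume "x \<in> Q0" "r \<in> {..<d x}" "c \<in> {..<d x}"
    thus "mm (W x) (g x) (f x) r c = idm r c" using inv1 by auto
  next
    fix x r c assume "x \<in> Q0" "r \<in> W x" "c \<in> W x"
    thus "mm {..<d x} (f x) (g x) r c = idm r c" using inv2 by auto
  next
    fix a r c assume a: "a \<in> Q1" and r: "r \<in> W (t a)" and c: "c \<in> {..<d (s a)}"
    have ta: "t a \<in> Q0" using Qt a by auto
    have "mm {..<d (t a)} (f (t a)) (Xt \<tau> a) r c =
        mm {..<d (t a)} (f (t a)) (mm (W (s a)) (mm (W (t a)) (g (t a)) (Mg B (At \<tau>) a)) (f (s a))) r c"
      by (rule mm_cong) (use a c in \<open>auto simp: Xt_def\<close>)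
    also have "\<dots> = mm (W (s a)) (Mg B (At \<tau>) a) (f (s a)) r c"
      by (rule sandwich_id[OF finW _ r]) (use inv2 ta in auto)
    finally show "mm (W (s a)) (Mg B (At \<tau>) a) (f (s a)) r c = mm {..<d (t a)} (f (t a)) (Xt \<tau> a) r c" by simp
  qed
  have cardI: "card I = q"
    unfolding I_def Iq_def using qs by (simp add: card_SigmaI sum_list_sum_nth atLeast0LessThan)
  obtain \<psi> where \<psi>: "bij_betw \<psi> {..<q} I"
    using finite_same_card_bij[of "{..<q}" I] finI cardI by auto
  have good: "Xt \<tau> \<in> \<Union>{orbit Q0 Q1 s t R d (bsumV s t B (replicate q 1)) (bsumM B ls') | ls' :: 'k list. length ls' = q \<and> 0 \<notin> set ls'}"
    if t0: "\<tau> \<noteq> 0" and nz: "\<forall>u\<in>I. \<mu>t \<tau> (fst u) (snd u) \<noteq> 0" for \<tau>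
  proof -
    define ls' where "ls' = map (\<lambda>i. \<mu>t \<tau> (fst (\<psi> i)) (snd (\<psi> i))) [0..<q]"
    have injm: "inj_on (\<mu>t \<tau> j) {..<qs ! j}" for j
      using t0 cc by (auto simp: inj_on_def \<mu>t_def inj_def)
    have c1: "rep_iso Q0 Q1 s t W (Mg B (At \<tau>)) W (Mg B (\<lambda>u' u. if u' = u then \<mu>t \<tau> (fst u') (snd u') else 0))"
      unfolding W_def I_def At_def by (rule conj_blocks) (rule injm)
    have c2: "rep_iso Q0 Q1 s t W (Mg B (\<lambda>u' u. if u' = u then \<mu>t \<tau> (fst u') (snd u') else 0))
        (bsumV s t B (replicate q 1)) (bsumM B ls')"
      unfolding W_def ls'_def using reindex2[OF \<psi> finI, where \<mu> = "\<lambda>u. \<mu>t \<tau> (fst u) (snd u)"] by simp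
    have "rep_iso Q0 Q1 s t (\<lambda>x. {..<d x}) (Xt \<tau>) (bsumV s t B (replicate q 1)) (bsumM B ls')"
      by (rule rep_iso_trans[OF finW Xt_iso rep_iso_trans[OF finW c1 c2]])
    hence "Xt \<tau> \<in> orbit Q0 Q1 s t R d (bsumV s t B (replicate q 1)) (bsumM B ls')"
      unfolding orbit_def using Xt_mod by auto
    moreover have "length ls' = q" unfolding ls'_def by simp
    moreover have "0 \<notin> set ls'"
      unfolding ls'_def using nz \<psi> by (auto simp: bij_betw_def)
    ultimately show ?thesis by blast
  qed
  have polyMg: "ispoly (\<lambda>\<tau>. Mg B (At \<tau>) a k1 k2)" for a k1 k2
    unfolding Mg_def ee_def At_def liftb_def Ab_def \<mu>t_def
    by (intro ispoly_sum ispoly_mult ispoly_if ispoly_add ispoly_const ispoly_id)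
  have polyX: "ispoly (\<lambda>\<tau>. Xt \<tau> a r c)" for a r c
    unfolding Xt_def
    by (intro ispoly_if ispoly_const ispoly_mm polyMg)
  have badfin: "finite {\<tau>. \<not> (\<tau> \<noteq> 0 \<and> (\<forall>u\<in>I. \<mu>t \<tau> (fst u) (snd u) \<noteq> 0))}"
  proof (rule finite_subset)
    show "{\<tau>. \<not> (\<tau> \<noteq> 0 \<and> (\<forall>u\<in>I. \<mu>t \<tau> (fst u) (snd u) \<noteq> 0))} \<subseteq> insert 0 ((\<lambda>u. - (ls ! fst u) / cc (snd u)) ` I)"
    proof
      fix \<tau> assume "\<tau> \<in> {\<tau>. \<not> (\<tau> \<noteq> 0 \<and> (\<forall>u\<in>I. \<mu>t \<tau> (fst u) (snd u) \<noteq> 0))}"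
      hence "\<tau> = 0 \<or> (\<exists>u\<in>I. ls ! fst u + \<tau> * cc (snd u) = 0)" by (auto simp: \<mu>t_def)
      thus "\<tau> \<in> insert 0 ((\<lambda>u. - (ls ! fst u) / cc (snd u)) ` I)"
      proof
        assume "\<exists>u\<in>I. ls ! fst u + \<tau> * cc (snd u) = 0"
        then obtain u where u: "u \<in> I" and e: "ls ! fst u + \<tau> * cc (snd u) = 0" by blast
        have "ls ! fst u \<in> set ls" using u lls unfolding I_def Iq_def by auto
        hence "ls ! fst u \<noteq> 0" using ls0 by auto
        hence "cc (snd u) \<noteq> 0" using e by auto
        hence "\<tau> = - (ls ! fst u) / cc (snd u)" using e by (simp add: field_simps add_eq_0_iff)
        thus ?thesis using u by auto
      qed simp
    qed
  qed (use finI in simp)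
  show ?thesis unfolding zclosure_def
  proof (intro CollectI conjI ballI impI)
    show "X \<in> modvar Q1 s t R d" by (rule Xmod)
  next
    fix h assume h: "h \<in> zpoly"
      and van: "\<forall>y\<in>\<Union>{orbit Q0 Q1 s t R d (bsumV s t B (replicate q 1)) (bsumM B ls') | ls' :: 'k list. length ls' = q \<and> 0 \<notin> set ls'}. h y = 0"
    have ph: "ispoly (\<lambda>\<tau>. h (Xt \<tau>))" by (rule zpoly_ispoly[OF h polyX])
    have "UNIV - {\<tau>. \<not> (\<tau> \<noteq> 0 \<and> (\<forall>u\<in>I. \<mu>t \<tau> (fst u) (snd u) \<noteq> 0))} \<subseteq> {\<tau>. h (Xt \<tau>) = 0}"
      using good van by blast
    moreover have "infinite (UNIV - {\<tau>. \<not> (\<tau> \<noteq> 0 \<and> (\<forall>u\<in>I. \<mu>t \<tau> (fst u) (snd u) \<noteq> 0))})"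
      using alg_closed_infinite[where 'k = 'k] badfin by (rule Diff_infinite_finite[rotated])
    ultimately have "infinite {\<tau>. h (Xt \<tau>) = 0}" using infinite_super by blast
    hence "h (Xt 0) = 0" by (rule ispoly_zero[OF ph])
    thus "h X = 0" using X0 by simp
  qed
qed



theorem mainTheorem1:
  fixes Q0 :: "'v set" and Q1 :: "'a set" and s t :: "'a \<Rightarrow> 'v"
    and R :: "('a \<times> 'a) set" and B :: "('a \<times> bool) list" and q :: nat
  assumes "gentle Q0 Q1 s t R" and "fin_dim Q1 s t R"
    and "is_band Q1 s t R B" and "q \<ge> 1"
  shows "zclosure (modvar Q1 s t R (\<lambda>x. q * band_dim s t B x))
           (band_family Q0 Q1 s t R B q :: ('a \<Rightarrow> nat \<Rightarrow> nat \<Rightarrow> 'k::alg_closed_field) set)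
       = zclosure (modvar Q1 s t R (\<lambda>x. q * band_dim s t B x))
           (\<Union>{orbit Q0 Q1 s t R (\<lambda>x. q * band_dim s t B x) (bsumV s t B (replicate q 1)) (bsumM B ls)
               | ls :: 'k list. length ls = q \<and> 0 \<notin> set ls})"
proof -
  have Qs: "s ` Q1 \<subseteq> Q0" and Qt: "t ` Q1 \<subseteq> Q0"
    and RQ: "R \<subseteq> {(a, b). a \<in> Q1 \<and> b \<in> Q1 \<and> t a = s b}"
    using assms(1) unfolding gentle_def quiver_def by auto
  define d where "d = (\<lambda>x. q * band_dim s t B x)"
  define S2 where "S2 = (\<Union>{orbit Q0 Q1 s t R d (bsumV s t B (replicate q 1)) (bsumM B ls)
               | ls :: 'k list. length ls = q \<and> 0 \<notin> set ls})"
  have sub1: "S2 \<subseteq> (band_family Q0 Q1 s t R B q :: ('a \<Rightarrow> nat \<Rightarrow> nat \<Rightarrow> 'k) set)"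
  proof
    fix X assume "X \<in> S2"
    then obtain ls :: "'k list" where ls: "length ls = q" "0 \<notin> set ls"
      and X: "X \<in> orbit Q0 Q1 s t R d (bsumV s t B (replicate q 1)) (bsumM B ls)"
      unfolding S2_def by blast
    have "(\<forall>j\<in>set (replicate q (1::nat)). j \<ge> 1) \<and> sum_list (replicate q (1::nat)) = q
        \<and> length ls = length (replicate q (1::nat)) \<and> (0::'k) \<notin> set ls"
      using ls by (simp add: sum_list_replicate)
    thus "X \<in> band_family Q0 Q1 s t R B q"
      unfolding band_family_def using X d_def by blast
  qed
  have sub2: "(band_family Q0 Q1 s t R B q :: ('a \<Rightarrow> nat \<Rightarrow> nat \<Rightarrow> 'k) set) \<subseteq> zclosure (modvar Q1 s t R d) S2"
  proof
    fix X :: "'a \<Rightarrow> nat \<Rightarrow> nat \<Rightarrow> 'k" assume "X \<in> band_family Q0 Q1 s t R B q"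
    then obtain qs and ls :: "'k list" where c: "\<forall>j\<in>set qs. j \<ge> 1" "sum_list qs = q" "length ls = length qs" "0 \<notin> set ls"
      and X: "X \<in> orbit Q0 Q1 s t R d (bsumV s t B qs) (bsumM B ls)"
      unfolding band_family_def d_def by blast
    show "X \<in> zclosure (modvar Q1 s t R d) S2"
      unfolding S2_def by (rule key[OF Qs Qt RQ assms(3) c(2) c(3) c(4) X])
  qed
  have "zclosure (modvar Q1 s t R d) (band_family Q0 Q1 s t R B q :: ('a \<Rightarrow> nat \<Rightarrow> nat \<Rightarrow> 'k) set)
      = zclosure (modvar Q1 s t R d) S2"
    using zclosure_sub[OF sub2] zclosure_mono[OF sub1] by (rule antisym)
  thus ?thesis unfolding d_def S2_def .
qed

end
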